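(* Let $A \in \mathbb{R}^{m \times n}$ be such that the map $\psi_A : \mathbb{R}^n \to \{-1,0,1\}^m$, $\psi_A(\mathbf{x}) = \mathrm{sign}(A\mathbf{x})$, satisfies $\psi_A(\mathbf{x}_1) \neq \psi_A(\mathbf{x}_2)$ whenever $\|\mathbf{x}_1\|_0, \|\mathbf{x}_2\|_0 \le k$ and $\mathrm{supp}(\mathbf{x}_1) \neq \mathrm{supp}(\mathbf{x}_2)$. Then $m = \Omega(k^2 \log n / \log k)$.
   Context: For real $x$, $\mathrm{sign}(x) = x/|x|$ if $x \neq 0$ and $\mathrm{sign}(0) = 0$, applied coordinatewise to vectors. $\|\mathbf{x}\|_0$ denotes the number of nonzero coordinates of $\mathbf{x}$, and $\mathrm{supp}(\mathbf{x})$ the set of indices of nonzero coordinates. *)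

theory Defs
  imports Complex_Main
begin

text \<open>Vectors in R^n are functions nat => real vanishing outside {..<n};
  an m x n matrix is a function nat => nat => real (only entries i<m, j<n matter).\<close>

definition is_vec :: "nat \<Rightarrow> (nat \<Rightarrow> real) \<Rightarrow> bool" where
  "is_vec n x \<longleftrightarrow> (\<forall>j\<ge>n. x j = 0)"

definition supp :: "(nat \<Rightarrow> real) \<Rightarrow> nat set" where
  "supp x = {j. x j \<noteq> 0}"

definition l0 :: "(nat \<Rightarrow> real) \<Rightarrow> nat" where
  "l0 x = card (supp x)"

text \<open>psi_A(x) = sign(A x), coordinatewise sign (Isabelle's sgn: sgn 0 = 0),
  as an element of {-1,0,1}^m (coordinates i >= m set to 0).\<close>
definition psi :: "nat \<Rightarrow> nat \<Rightarrow> (nat \<Rightarrow> nat \<Rightarrow> real) \<Rightarrow> (nat \<Rightarrow> real) \<Rightarrow> (nat \<Rightarrow> real)" where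
  "psi m n A x = (\<lambda>i. if i < m then sgn (\<Sum>j<n. A i j * x j) else 0)"

definition support_recovering :: "nat \<Rightarrow> nat \<Rightarrow> nat \<Rightarrow> (nat \<Rightarrow> nat \<Rightarrow> real) \<Rightarrow> bool" where
  "support_recovering m n k A \<longleftrightarrow>
     (\<forall>x1 x2. is_vec n x1 \<longrightarrow> is_vec n x2 \<longrightarrow> l0 x1 \<le> k \<longrightarrow> l0 x2 \<le> k \<longrightarrow>
        supp x1 \<noteq> supp x2 \<longrightarrow> psi m n A x1 \<noteq> psi m n A x2)"

end

theory Submission
  imports Defs
begin


definition cf :: "nat \<Rightarrow> nat set \<Rightarrow> (nat \<Rightarrow> nat set) \<Rightarrow> bool" where
  "cf r J F \<longleftrightarrow> (\<forall>j\<in>J. \<forall>S. S \<subseteq> J - {j} \<longrightarrow> card S \<le> r \<longrightarrow> \<not> F j \<subseteq> \<Union>(F ` S))"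

lemma split_small:
  "finite A \<Longrightarrow> card A \<le> r * t \<Longrightarrow>
   \<exists>P. finite P \<and> card P \<le> r \<and> (\<forall>B\<in>P. B \<subseteq> A \<and> card B \<le> t) \<and> \<Union>P = A"
proof (induction r arbitrary: A)
  case 0
  then show ?case by (intro exI[of _ "{}"]) auto
next
  case (Suc r)
  show ?case
  proof (cases "card A \<le> t")
    case True
    then show ?thesis by (intro exI[of _ "{A}"]) simp
  next
    case False
    then have tA: "t \<le> card A" by simp
    obtain B where B: "B \<subseteq> A" "card B = t" "finite B"
      using obtain_subset_with_card_n[OF tA] by blast
    have c: "card (A - B) = card A - t" using B card_Diff_subset by metis
    have c1: "card (A - B) \<le> r * t" using Suc.prems(2) unfolding c by simp
    have c2: "finite (A - B)" using Suc.prems(1) by simp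
    obtain P where P': "finite P" "card P \<le> r" "\<forall>C\<in>P. C \<subseteq> A - B \<and> card C \<le> t" "\<Union>P = A - B"
      using Suc.IH[OF c2 c1] by (elim exE conjE) simp
    have "card (insert B P) \<le> Suc r" using P'(1,2) by (simp add: card_insert_if)
    moreover have "\<forall>C\<in>insert B P. C \<subseteq> A \<and> card C \<le> t" using P'(3) B(1,2) by auto
    moreover have "\<Union>(insert B P) = A" using P'(4) B(1) by auto
    ultimately show ?thesis using P'(1) by (intro exI[of _ "insert B P"]) simp
  qed
qed

lemma priv_lemma:
  assumes "finite J" "finite U" "cf r J F" "\<forall>j\<in>J. F j \<subseteq> U \<and> card (F j) \<le> r * t"
  shows "card J \<le> card {T. T \<subseteq> U \<and> card T \<le> t}"
proof -
  have ex: "\<exists>T. T \<subseteq> F j \<and> card T \<le> t \<and> (\<forall>l\<in>J-{j}. \<not> T \<subseteq> F l)" if j: "j \<in> J" for j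
  proof (rule ccontr)
    assume nex: "\<not> (\<exists>T. T \<subseteq> F j \<and> card T \<le> t \<and> (\<forall>l\<in>J-{j}. \<not> T \<subseteq> F l))"
    have H: "\<exists>l\<in>J-{j}. T \<subseteq> F l" if "T \<subseteq> F j" "card T \<le> t" for T
      using nex that by auto
    have fU: "F j \<subseteq> U" and cj: "card (F j) \<le> r * t" using assms(4) j by auto
    have fin: "finite (F j)" using assms(2) fU by (rule finite_subset[rotated])
    obtain P where P: "finite P" "card P \<le> r" "\<forall>B\<in>P. B \<subseteq> F j \<and> card B \<le> t" "\<Union>P = F j"
      using split_small[OF fin cj] by blast
    have "\<forall>B\<in>P. \<exists>l. l \<in> J-{j} \<and> B \<subseteq> F l"
    proof
      fix B assume "B \<in> P"
      then have "B \<subseteq> F j" "card B \<le> t" using P(3) by auto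
      then obtain l where "l \<in> J-{j}" "B \<subseteq> F l" using H by metis
      then show "\<exists>l. l \<in> J-{j} \<and> B \<subseteq> F l" by auto
    qed
    from bchoice[OF this] obtain g where g: "\<forall>B\<in>P. g B \<in> J-{j} \<and> B \<subseteq> F (g B)"
      by auto
    have "card (g ` P) \<le> r" using P(2) card_image_le[OF P(1), of g] by linarith
    moreover have "g ` P \<subseteq> J - {j}" using g by auto
    moreover have "F j \<subseteq> \<Union>(F ` (g ` P))"
    proof
      fix x assume "x \<in> F j"
      then obtain B where B: "B \<in> P" "x \<in> B" using P(4) by auto
      then have "x \<in> F (g B)" using g by auto
      then show "x \<in> \<Union>(F ` (g ` P))" using B(1) by auto
    qed
    ultimately show False using assms(3)[unfolded cf_def, rule_format, OF j, of "g ` P"] by simp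
  qed
  then have "\<forall>j\<in>J. \<exists>T. T \<subseteq> F j \<and> card T \<le> t \<and> (\<forall>l\<in>J-{j}. \<not> T \<subseteq> F l)" by auto
  from bchoice[OF this] obtain T where T: "\<forall>j\<in>J. T j \<subseteq> F j \<and> card (T j) \<le> t \<and> (\<forall>l\<in>J-{j}. \<not> T j \<subseteq> F l)"
    by auto
  have inj: "inj_on T J"
  proof (rule inj_onI)
    fix a b assume ab: "a \<in> J" "b \<in> J" "T a = T b"
    show "a = b"
    proof (rule ccontr)
      assume "a \<noteq> b"
      then have "\<not> T b \<subseteq> F a" using T ab by auto
      then show False using T ab by auto
    qed
  qed
  have "T ` J \<subseteq> {T. T \<subseteq> U \<and> card T \<le> t}" using T assms(4) by fastforce
  moreover have "finite {T. T \<subseteq> U \<and> card T \<le> t}" using assms(2) by auto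
  ultimately show ?thesis by (rule card_inj_on_le[OF inj])
qed

lemma greedy:
  "\<forall>r J F U. q < r \<longrightarrow> finite J \<longrightarrow> finite U \<longrightarrow> cf r J F \<longrightarrow> (\<forall>j\<in>J. F j \<subseteq> U) \<longrightarrow>
     card U \<le> (q+1)*(r-q)*t \<longrightarrow> card J \<le> q + card {T. T \<subseteq> U \<and> card T \<le> t}"
proof (induction q)
  case 0
  show ?case
  proof (intro allI impI)
    fix r J F U assume a: "0 < (r::nat)" "finite J" "finite (U::nat set)" "cf r J F" "\<forall>j\<in>J. F j \<subseteq> U"
      "card U \<le> (0+1)*(r-0)*t"
    have "\<forall>j\<in>J. F j \<subseteq> U \<and> card (F j) \<le> r * t"
    proof
      fix j assume "j \<in> J"
      then have "F j \<subseteq> U" using a(5) by simp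
      moreover have "card (F j) \<le> card U" using card_mono[OF a(3) \<open>F j \<subseteq> U\<close>] .
      ultimately show "F j \<subseteq> U \<and> card (F j) \<le> r * t" using a(6) by simp
    qed
    then show "card J \<le> 0 + card {T. T \<subseteq> U \<and> card T \<le> t}" using priv_lemma[OF a(2,3,4)] by simp
  qed
next
  case (Suc q)
  show ?case
  proof (intro allI impI)
    fix r J F U assume a: "Suc q < (r::nat)" "finite J" "finite (U::nat set)" "cf r J F" "\<forall>j\<in>J. F j \<subseteq> U"
      "card U \<le> (Suc q+1)*(r-Suc q)*t"
    have finN: "finite {T. T \<subseteq> U \<and> card T \<le> t}" using a(3) by auto
    show "card J \<le> Suc q + card {T. T \<subseteq> U \<and> card T \<le> t}"
    proof (cases "\<forall>j\<in>J. card (F j) \<le> r * t")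
      case True
      then have "\<forall>j\<in>J. F j \<subseteq> U \<and> card (F j) \<le> r * t" using a(5) by auto
      then have "card J \<le> card {T. T \<subseteq> U \<and> card T \<le> t}" by (rule priv_lemma[OF a(2,3,4)])
      then show ?thesis by simp
    next
      case False
      then obtain j0 where j0: "j0 \<in> J" "r * t < card (F j0)" by auto
      define s where "s = r - Suc (Suc q)"
      have s: "r = Suc (Suc q) + s" using a(1) unfolding s_def by simp
      define F' where "F' = (\<lambda>j. F j - F j0)"
      define J' where "J' = J - {j0}"
      define U' where "U' = U - F j0"
      have cf': "cf (r - 1) J' F'"
        unfolding cf_def
      proof (intro ballI allI impI)
        fix j S assume j: "j \<in> J'" and S: "S \<subseteq> J' - {j}" "card S \<le> r - 1"
        show "\<not> F' j \<subseteq> \<Union> (F' ` S)"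
        proof
          assume h: "F' j \<subseteq> \<Union> (F' ` S)"
          have "F j \<subseteq> \<Union> (F ` insert j0 S)" using h unfolding F'_def by auto
          moreover have "insert j0 S \<subseteq> J - {j}" using S j j0 unfolding J'_def by auto
          moreover have "card (insert j0 S) \<le> r"
          proof -
            have "finite S" using S(1) a(2) unfolding J'_def by (meson finite_Diff finite_subset)
            then have "card (insert j0 S) \<le> Suc (card S)" by (simp add: card_insert_if)
            then show ?thesis using S(2) a(1) by linarith
          qed
          moreover have jJ: "j \<in> J" using j unfolding J'_def by simp
          ultimately show False using a(4)[unfolded cf_def, rule_format, OF jJ, of "insert j0 S"] by simp
        qed
      qed
      have cU: "card U' + card (F j0) = card U"
        proof -
        have fs: "F j0 \<subseteq> U" using a(5) j0(1) by auto
        then have "finite (F j0)" using a(3) finite_subset by blast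
        then show ?thesis unfolding U'_def using card_Diff_subset[OF _ fs] card_mono[OF a(3) fs] by simp
      qed
      have "card U' \<le> (q+1)*((r-1)-q)*t"
      proof -
        have h: "card U' + (q+2+s)*t \<le> (q+2)*(s+1)*t" using cU j0(2) a(6) s by simp
        have e1: "(q+2)*(s+1)*t = (q+1)*(s+1)*t + (s+1)*t" by (simp add: algebra_simps)
        have e2: "(s+1)*t \<le> (q+2+s)*t" using mult_le_mono1[of "s+1" "q+2+s" t] by simp
        have "card U' \<le> (q+1)*(s+1)*t" using h e1 e2 by linarith
        then show ?thesis using s by simp
      qed
      moreover have "q < r - 1" using a(1) by simp
      moreover have "finite J'" "finite U'" using a(2,3) unfolding J'_def U'_def by auto
      moreover have "\<forall>j\<in>J'. F' j \<subseteq> U'" using a(5) unfolding J'_def U'_def F'_def by auto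
      ultimately have i1: "card J' \<le> q + card {T. T \<subseteq> U' \<and> card T \<le> t}"
        using Suc.IH[rule_format, of "r-1" J' U' F'] cf' by simp
      have i2: "card {T. T \<subseteq> U' \<and> card T \<le> t} \<le> card {T. T \<subseteq> U \<and> card T \<le> t}"
        by (rule card_mono[OF finN]) (auto simp: U'_def)
      have "card J' \<le> q + card {T. T \<subseteq> U \<and> card T \<le> t}" using i1 i2 by linarith
      moreover have "card J = Suc (card J')" unfolding J'_def by (rule card.remove[OF a(2) j0(1)])
      ultimately show ?thesis by simp
    qed
  qed
qed

lemma Nbound:
  fixes x :: real
  assumes "finite U" "0 < x" "x \<le> 1"
  shows "real (card {T. T \<subseteq> U \<and> card T \<le> t}) * x ^ t \<le> exp (real (card U) * x)"
proof -
  let ?Q = "{T. T \<subseteq> U \<and> card T \<le> t}"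
  have fQ: "finite (Pow U)" using assms(1) by simp
  have sub: "?Q \<subseteq> Pow U" by auto
  have "real (card ?Q) * x ^ t = (\<Sum>T\<in>?Q. x ^ t)" by simp
  also have "\<dots> \<le> (\<Sum>T\<in>?Q. x ^ card T)"
  proof (rule sum_mono)
    fix T assume "T \<in> ?Q"
    then have "card T \<le> t" by simp
    then show "x ^ t \<le> x ^ card T" using power_decreasing[of "card T" t x] assms(2,3) by simp
  qed
  also have "\<dots> \<le> (\<Sum>T\<in>Pow U. x ^ card T)"
  proof (rule sum_mono2[OF fQ sub])
    fix T show "0 \<le> x ^ card T" using assms(2) by simp
  qed
  also have "\<dots> = (\<Prod>i\<in>U. x + 1)"
    using prod_add[OF assms(1), of "\<lambda>_. x" "\<lambda>_. 1"] by simp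
  also have "\<dots> = (1 + x) ^ card U" by (simp add: add.commute)
  also have "\<dots> \<le> exp x ^ card U"
    by (rule power_mono) (use assms(2) in simp_all)
  also have "\<dots> = exp (real (card U) * x)" by (simp add: exp_of_nat_mult)
  finally show ?thesis .
qed



lemma generic:
  fixes A :: "nat \<Rightarrow> nat \<Rightarrow> real"
  shows "finite S \<Longrightarrow> S \<subseteq> {..<n} \<Longrightarrow>
    \<exists>x. supp x = S \<and> (\<forall>i<m. (\<exists>s\<in>S. A i s \<noteq> 0) \<longrightarrow> (\<Sum>j<n. A i j * x j) \<noteq> 0)"
proof (induction S rule: finite_induct)
  case empty
  show ?case by (intro exI[of _ "\<lambda>_. 0"]) (simp add: supp_def)
next
  case (insert a S)
  then obtain x where x: "supp x = S" "\<forall>i<m. (\<exists>s\<in>S. A i s \<noteq> 0) \<longrightarrow> (\<Sum>j<n. A i j * x j) \<noteq> 0"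
    by auto
  have an: "a < n" using insert.prems by auto
  have xa: "x a = 0" using x(1) insert.hyps(2) unfolding supp_def by auto
  define B where "B = insert 0 ((\<lambda>i. - (\<Sum>j<n. A i j * x j) / A i a) ` {..<m})"
  have "finite B" unfolding B_def by simp
  then obtain c :: real where c: "c \<notin> B" using ex_new_if_finite[OF infinite_UNIV_char_0] by blast
  define x' where "x' = (\<lambda>j. x j + (if j = a then c else 0))"
  have c0: "c \<noteq> 0" using c unfolding B_def by auto
  have "supp x' = insert a S"
    using c0 xa x(1) unfolding supp_def x'_def by auto
  moreover have sumx': "(\<Sum>j<n. A i j * x' j) = (\<Sum>j<n. A i j * x j) + A i a * c" for i
  proof -
    have "(\<Sum>j<n. A i j * x' j) = (\<Sum>j<n. A i j * x j + (if j = a then A i a * c else 0))"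
      unfolding x'_def by (rule sum.cong) (auto simp: distrib_left)
    also have "\<dots> = (\<Sum>j<n. A i j * x j) + (\<Sum>j<n. (if j = a then A i a * c else 0))"
      by (rule sum.distrib)
    also have "(\<Sum>j<n. (if j = a then A i a * c else 0)) = A i a * c"
      using an by (simp add: sum.delta)
    finally show ?thesis .
  qed
  moreover have "\<forall>i<m. (\<exists>s\<in>insert a S. A i s \<noteq> 0) \<longrightarrow> (\<Sum>j<n. A i j * x' j) \<noteq> 0"
  proof (intro allI impI)
    fix i assume i: "i < m" and ex: "\<exists>s\<in>insert a S. A i s \<noteq> 0"
    show "(\<Sum>j<n. A i j * x' j) \<noteq> 0"
    proof (cases "A i a = 0")
      case True
      then have "\<exists>s\<in>S. A i s \<noteq> 0" using ex by auto
      then show ?thesis using x(2) i sumx'[of i] True by simp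
    next
      case False
      show ?thesis
      proof
        assume "(\<Sum>j<n. A i j * x' j) = 0"
        then have "(\<Sum>j<n. A i j * x j) + A i a * c = 0" using sumx'[of i] by simp
        then have "c = - (\<Sum>j<n. A i j * x j) / A i a" using False by (simp add: field_simps)
        then have "c \<in> B" unfolding B_def using i by auto
        then show False using c by simp
      qed
    qed
  qed
  ultimately show ?case by blast
qed

lemma sgn_pert:
  fixes a b :: real
  assumes "\<bar>b\<bar> < \<bar>a\<bar>"
  shows "sgn (a + b) = sgn a"
proof -
  have h: "b < \<bar>a\<bar>" "- b < \<bar>a\<bar>" using assms by (auto simp: abs_less_iff)
  show ?thesis
  proof (cases "a > 0")
    case True
    then have "a + b > 0" using h by simp
    then show ?thesis using True by simp
  next
    case False
    then have a0: "a < 0" using assms by (cases "a = 0") auto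
    then have "a + b < 0" using h by simp
    then show ?thesis using a0 by simp
  qed
qed

lemma is_vec_supp: "supp v \<subseteq> {..<n} \<Longrightarrow> is_vec n v"
  unfolding is_vec_def supp_def by force

lemma cf_of_sr:
  assumes SR: "support_recovering m n k A" and k1: "1 \<le> k"
  shows "cf (k-1) {..<n} (\<lambda>j. {i. i<m \<and> A i j \<noteq> 0})"
  unfolding cf_def
proof (intro ballI allI impI notI)
  fix j0 S
  assume j0: "j0 \<in> {..<n}" and S: "S \<subseteq> {..<n} - {j0}" and cS: "card S \<le> k - 1"
    and H: "{i. i<m \<and> A i j0 \<noteq> 0} \<subseteq> \<Union>((\<lambda>j. {i. i<m \<and> A i j \<noteq> 0}) ` S)"
  have fS: "finite S" using S finite_subset by blast
  have Sn: "S \<subseteq> {..<n}" using S by auto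
  obtain x where x: "supp x = S" "\<forall>i<m. (\<exists>s\<in>S. A i s \<noteq> 0) \<longrightarrow> (\<Sum>j<n. A i j * x j) \<noteq> 0"
    using generic[OF fS Sn, of m A] by blast
  define \<sigma> where "\<sigma> = (\<lambda>i. (\<Sum>j<n. A i j * x j))"
  define L where "L = 1 + (\<Sum>i<m. \<bar>A i j0\<bar> / \<bar>\<sigma> i\<bar>)"
  have Lge: "\<bar>A i j0\<bar> / \<bar>\<sigma> i\<bar> < L" if "i < m" for i
  proof -
    have "\<bar>A i j0\<bar> / \<bar>\<sigma> i\<bar> \<le> (\<Sum>i<m. \<bar>A i j0\<bar> / \<bar>\<sigma> i\<bar>)"
      by (rule member_le_sum) (use that in auto)
    then show ?thesis unfolding L_def by simp
  qed
  have L0: "L > 0" using Lge[of 0] by (cases "m = 0") (auto simp: L_def, smt (verit) divide_nonneg_nonneg abs_ge_zero)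
  define z where "z = (\<lambda>j. L * x j)"
  define y where "y = (\<lambda>j. L * x j + (if j = j0 then 1 else 0))"
  have xj0: "x j0 = 0" using x(1) S unfolding supp_def by auto
  have sz: "supp z = S" using x(1) L0 unfolding supp_def z_def by auto
  have sy: "supp y = insert j0 S" using x(1) L0 xj0 unfolding supp_def y_def by auto
  have vz: "is_vec n z" using sz Sn by (intro is_vec_supp) simp
  have vy: "is_vec n y" using sy Sn j0 by (intro is_vec_supp) simp
  have lz: "l0 z \<le> k" using sz cS unfolding l0_def by simp
  have "j0 \<notin> S" using S by auto
  then have "card (insert j0 S) = Suc (card S)" using fS by simp
  then have ly: "l0 y \<le> k" using sy cS k1 unfolding l0_def by simp
  have ne: "supp z \<noteq> supp y" using sz sy S by auto
  have "psi m n A z = psi m n A y"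
  proof
    fix i
    show "psi m n A z i = psi m n A y i"
    proof (cases "i < m")
      case False then show ?thesis unfolding psi_def by simp
    next
      case im: True
      have ez: "(\<Sum>j<n. A i j * z j) = L * \<sigma> i"
        unfolding z_def \<sigma>_def by (simp add: sum_distrib_left mult_ac)
      have ey: "(\<Sum>j<n. A i j * y j) = L * \<sigma> i + A i j0"
      proof -
        have "(\<Sum>j<n. A i j * y j) = (\<Sum>j<n. L * (A i j * x j) + (if j = j0 then A i j0 else 0))"
          unfolding y_def by (rule sum.cong) (auto simp: distrib_left mult_ac)
        also have "\<dots> = (\<Sum>j<n. L * (A i j * x j)) + (\<Sum>j<n. (if j = j0 then A i j0 else 0))"
          by (rule sum.distrib)
        also have "\<dots> = L * \<sigma> i + A i j0"
          using j0 unfolding \<sigma>_def by (simp add: sum_distrib_left sum.delta)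
        finally show ?thesis .
      qed
      have "sgn (L * \<sigma> i + A i j0) = sgn (L * \<sigma> i)"
      proof (cases "A i j0 = 0")
        case True then show ?thesis by simp
      next
        case False
        then have "i \<in> \<Union>((\<lambda>j. {i. i<m \<and> A i j \<noteq> 0}) ` S)" using H im by blast
        then obtain s where "s \<in> S" "A i s \<noteq> 0" by auto
        then have sn: "\<sigma> i \<noteq> 0" using x(2) im unfolding \<sigma>_def by blast
        have "\<bar>A i j0\<bar> / \<bar>\<sigma> i\<bar> < L" using Lge im by simp
        then have "\<bar>A i j0\<bar> < L * \<bar>\<sigma> i\<bar>" using sn by (simp add: divide_less_eq)
        then have "\<bar>A i j0\<bar> < \<bar>L * \<sigma> i\<bar>" using L0 by (simp add: abs_mult)
        then show ?thesis by (rule sgn_pert)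
      qed
      then show ?thesis unfolding psi_def using im ez ey by simp
    qed
  qed
  then show False using SR vz vy lz ly ne unfolding support_recovering_def by blast
qed



lemma ln2_ge: "1/2 \<le> ln (2::real)"
proof -
  have "exp (1/2::real) * exp (1/2) = exp 1" by (simp flip: exp_add)
  also have "\<dots> \<le> 3" by (rule exp_le)
  finally have h: "exp (1/2::real) * exp (1/2) \<le> 3" .
  have "exp (1/2::real) < 2"
  proof (rule ccontr)
    assume "\<not> exp (1/2::real) < 2"
    then have "2 \<le> exp (1/2::real)" by simp
    then have "2 * 2 \<le> exp (1/2::real) * exp (1/2)" by (intro mult_mono) auto
    then show False using h by simp
  qed
  then have "ln (exp (1/2::real)) < ln 2" by (subst ln_less_cancel_iff) auto
  then show ?thesis by simp
qed

lemma xlnx: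
  fixes a b :: real
  assumes "4 \<le> a" "a \<le> b"
  shows "a * ln b \<le> b * ln a"
proof -
  have a0: "a > 0" using assms by simp
  define s where "s = b / a"
  have bs: "b = a * s" unfolding s_def using a0 by simp
  have s1: "s \<ge> 1" unfolding s_def using assms a0 by simp
  have "ln b = ln a + ln s" unfolding bs using a0 s1 by (simp add: ln_mult)
  moreover have "ln s \<le> s - 1" using s1 by (intro ln_le_minus_one) simp
  moreover have "ln a \<ge> 1"
  proof -
    have "ln (4::real) = 2 * ln 2" using ln_realpow[of 2 2] by simp
    then have "ln (4::real) \<ge> 1" using ln2_ge by simp
    moreover have "ln 4 \<le> ln a" using assms(1) by (intro ln_mono) auto
    ultimately show ?thesis by simp
  qed
  ultimately have "a * ln b \<le> a * ln a + a * (s - 1)" using a0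
    by (simp add: distrib_left)
  also have "\<dots> = a * ln a + (b - a)" unfolding bs by (simp add: algebra_simps)
  also have "\<dots> \<le> a * ln a + (b - a) * ln a"
    using \<open>ln a \<ge> 1\<close> assms by (simp add: mult_le_cancel_left1)
  also have "\<dots> = b * ln a" by (simp add: algebra_simps)
  finally show ?thesis .
qed


theorem theorem2:
  shows "\<exists>c>0. \<forall>m n k (A :: nat \<Rightarrow> nat \<Rightarrow> real).
           2 \<le> k \<longrightarrow> k\<^sup>2 \<le> n \<longrightarrow> support_recovering m n k A \<longrightarrow>
           real m \<ge> c * (real k)\<^sup>2 * ln (real n) / ln (real k)"
proof (intro exI[of _ "1/160"] conjI allI impI)
  show "(0::real) < 1/160" by simp
  fix m n k :: nat and A :: "nat \<Rightarrow> nat \<Rightarrow> real"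
  assume k2: "2 \<le> k" and kn: "k\<^sup>2 \<le> n" and SR: "support_recovering m n k A"
  define r where "r = k - 1"
  have r1: "1 \<le> r" and kr: "k = r + 1" using k2 by (auto simp: r_def)
  define F where "F = (\<lambda>j. {i. i<m \<and> A i j \<noteq> 0})"
  have cfF: "cf r {..<n} F" using cf_of_sr[OF SR] k2 unfolding F_def r_def by simp
  define q where "q = r div 2"
  define t where "t = 4*m div r\<^sup>2 + 1"
  have r2pos: "0 < r\<^sup>2" using r1 by simp
  have tbig: "4*m < t * r\<^sup>2"
  proof -
    have e: "4*m = (4*m div r\<^sup>2) * r\<^sup>2 + 4*m mod r\<^sup>2" by (rule div_mult_mod_eq[symmetric])
    have "4*m mod r\<^sup>2 < r\<^sup>2" using r2pos by simp
    moreover have "t * r\<^sup>2 = (4*m div r\<^sup>2) * r\<^sup>2 + r\<^sup>2" unfolding t_def by (simp add: distrib_right)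
    ultimately show ?thesis using e by linarith
  qed
  have rq: "r\<^sup>2 \<le> 4*((q+1)*(r-q))"
  proof (cases "even r")
    case True
    then obtain a where a: "r = 2*a" by blast
    then have "q = a" "r - q = a" unfolding q_def by auto
    then show ?thesis using a by (simp add: power2_eq_square algebra_simps)
  next
    case False
    then obtain a where a: "r = 2*a+1" using oddE by blast
    then have "q = a" "r - q = a + 1" unfolding q_def by auto
    then show ?thesis using a by (simp add: power2_eq_square algebra_simps)
  qed
  have mle: "m \<le> (q+1)*(r-q)*t"
  proof -
    have "t * r\<^sup>2 \<le> t * (4*((q+1)*(r-q)))" using mult_le_mono2[OF rq] by blast
    then have "t * r\<^sup>2 \<le> 4 * ((q+1)*(r-q)*t)" by (simp add: mult_ac)
    then show ?thesis using tbig by linarith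
  qed
  define N where "N = card {T. T \<subseteq> {..<m} \<and> card T \<le> t}"
  have qr: "q < r" using r1 unfolding q_def by simp
  have Fsub: "\<forall>j\<in>{..<n}. F j \<subseteq> {..<m}" unfolding F_def by auto
  have nN: "n \<le> q + N"
    using greedy[of q t, rule_format, of r "{..<n}" "{..<m}" F] qr cfF Fsub mle
    unfolding N_def by simp
  have qk: "q + 1 \<le> k" using qr kr by simp
  have finN: "finite {T. T \<subseteq> {..<m} \<and> card T \<le> t}" by simp
  have N1: "1 \<le> N"
  proof -
    have "{} \<in> {T. T \<subseteq> {..<m} \<and> card T \<le> t}" by simp
    then have "{T. T \<subseteq> {..<m} \<and> card T \<le> t} \<noteq> {}" by blast
    then show ?thesis unfolding N_def using finN by (simp add: Suc_le_eq card_gt_0_iff)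
  qed
  define K where "K = real k"
  have K2: "2 \<le> K" using k2 unfolding K_def by simp
  have lnK: "1/2 \<le> ln K"
  proof -
    have "ln 2 \<le> ln K" using K2 by (intro ln_mono) auto
    then show ?thesis using ln2_ge by linarith
  qed
  have K2n: "K\<^sup>2 \<le> real n" using kn unfolding K_def by (metis of_nat_le_iff of_nat_power)
  have lnn: "2 * ln K \<le> ln (real n)"
  proof -
    have "ln (K\<^sup>2) \<le> ln (real n)" using K2n K2 by (intro ln_mono) auto
    then show ?thesis using ln_realpow[of K 2] by simp
  qed
  have npos: "0 < real n" using K2n K2 by (smt (verit) zero_less_power)
  have main: "K\<^sup>2 * ln (real n) \<le> 160 * real m * ln K"
  proof (cases "4*m < r\<^sup>2")
    case True
    then have t1: "t = 1" unfolding t_def by simp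
    have "{T. T \<subseteq> {..<m} \<and> card T \<le> t} \<subseteq> insert {} ((\<lambda>i. {i}) ` {..<m})"
    proof
      fix T assume "T \<in> {T. T \<subseteq> {..<m} \<and> card T \<le> t}"
      then have T: "T \<subseteq> {..<m}" "card T \<le> 1" using t1 by auto
      have fT: "finite T" using T(1) finite_subset by blast
      show "T \<in> insert {} ((\<lambda>i. {i}) ` {..<m})"
      proof (cases "card T = 0")
        case True then show ?thesis using fT by simp
      next
        case False
        then have "card T = 1" using T(2) by simp
        then obtain i where "T = {i}" by (auto simp: card_Suc_eq)
        then show ?thesis using T(1) by auto
      qed
    qed
    then have "N \<le> card (insert {} ((\<lambda>i. {i}) ` {..<m}))" unfolding N_def
      by (intro card_mono) auto
    also have "\<dots> \<le> Suc (card ((\<lambda>i. {i}) ` {..<m}))" by (rule card_insert_le_m1) simp_all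
    also have "\<dots> \<le> Suc m" using card_image_le[of "{..<m}" "\<lambda>i. {i}"] by simp
    finally have "N \<le> Suc m" .
    then have "n \<le> k + m" using nN qk by linarith
    moreover have "2 * k \<le> n" using kn k2 by (metis mult_le_mono1 power2_eq_square order.trans)
    ultimately have nm: "real n \<le> 2 * real m" by linarith
    have "K\<^sup>2 * ln (real n) \<le> real n * ln (K\<^sup>2)"
      by (rule xlnx) (use K2 K2n in \<open>auto simp: power2_eq_square intro: mult_mono[of 2 K 2 K, simplified]\<close>)
    also have "\<dots> = 2 * real n * ln K" using ln_realpow[of K 2] by simp
    also have "\<dots> \<le> 2 * (2 * real m) * ln K" using nm lnK by (intro mult_right_mono) auto
    also have "\<dots> \<le> 160 * real m * ln K" using lnK by (intro mult_right_mono) auto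
    finally show ?thesis .
  next
    case False
    then have rm: "r\<^sup>2 \<le> 4*m" by simp
    define R where "R = real r"
    have R1: "1 \<le> R" using r1 unfolding R_def by simp
    have R2: "1 \<le> R\<^sup>2" using R1 by (simp add: one_le_power)
    define x where "x = 1 / R\<^sup>2"
    have x0a: "0 < x" unfolding x_def using R1 by simp
    have x0b: "x \<le> 1" unfolding x_def using R1 R2 by (simp add: divide_le_eq)
    note x0 = x0a x0b
    have NB: "real N * x ^ t \<le> exp (real m * x)"
      using Nbound[of "{..<m}" x t] x0 unfolding N_def by simp
    define M where "M = real m / R\<^sup>2"
    have Mx: "real m * x = M" unfolding M_def x_def by simp
    have xt: "x ^ t = 1 / (R\<^sup>2)^t" unfolding x_def by (simp add: power_one_over)
    have Rne: "R \<noteq> 0" using R1 by simp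
    have Rtpos: "0 < (R\<^sup>2)^t" using R1 by simp
    have "real N / (R\<^sup>2)^t \<le> exp M" using NB unfolding xt Mx by simp
    then have NB2: "real N \<le> exp M * (R\<^sup>2)^t" using Rtpos by (simp add: divide_le_eq)
    have lnN: "ln (real N) \<le> M + real t * (2 * ln R)"
    proof -
      have "ln (real N) \<le> ln (exp M * (R\<^sup>2)^t)" using NB2 N1 by (intro ln_mono) auto
      also have "\<dots> = M + ln ((R\<^sup>2)^t)" using Rtpos Rne by (simp add: ln_mult)
      also have "ln ((R\<^sup>2)^t) = real t * (2 * ln R)" by (simp add: ln_realpow)
      finally show ?thesis .
    qed
    have M14: "1/4 \<le> M"
    proof -
      have "R\<^sup>2 \<le> 4 * real m" using rm unfolding R_def by (metis of_nat_le_iff of_nat_mult of_nat_numeral of_nat_power)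
      then show ?thesis unfolding M_def using R2 Rne by (simp add: field_simps)
    qed
    have t8: "real t \<le> 8 * M"
    proof -
      have "real (4*m div r\<^sup>2) \<le> real (4*m) / real (r\<^sup>2)" by (rule of_nat_div_le_of_nat)
      also have "\<dots> = 4 * M" unfolding M_def R_def by simp
      finally have "real t \<le> 4 * M + 1" unfolding t_def by simp
      then show ?thesis using M14 by simp
    qed
    have RK: "R \<le> K" and K2R: "K \<le> 2 * R" using kr r1 unfolding R_def K_def by auto
    have lnR: "0 \<le> ln R" "ln R \<le> ln K" using R1 RK by (auto intro: ln_mono)
    have "real t * (2 * ln R) \<le> (8 * M) * (2 * ln K)"
      using t8 lnR by (intro mult_mono) auto
    then have lnN2: "ln (real N) \<le> M + 16 * M * ln K" using lnN by simp
    have nKN: "real n \<le> K * real N"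
    proof -
      have a1: "q * 1 \<le> q * N" using N1 by (rule mult_le_mono2)
      have a2: "(q+1)*N = q*N + N" by simp
      have a3: "(q+1)*N \<le> k*N" using qk by (rule mult_le_mono1)
      have "n \<le> k * N" using nN a1 a2 a3 by linarith
      then have "real n \<le> real (k * N)" by (rule of_nat_mono)
      then show ?thesis unfolding K_def by simp
    qed
    have lnn2: "ln (real n) \<le> ln K + ln (real N)"
    proof -
      have "ln (real n) \<le> ln (K * real N)" using nKN npos by (intro ln_mono) auto
      also have "\<dots> = ln K + ln (real N)" using K2 N1 by (simp add: ln_mult)
      finally show ?thesis .
    qed
    have "M * 1 \<le> M * (2 * ln K)" using lnK M14 by (intro mult_left_mono) auto
    then have "M \<le> 2 * M * ln K" by simp
    then have L: "ln (real n) \<le> 36 * M * ln K" using lnn2 lnN2 lnn by linarith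
    have KM: "K\<^sup>2 * M \<le> 4 * real m"
    proof -
      have "K\<^sup>2 \<le> (2 * R)\<^sup>2" using power_mono[OF K2R, of 2] K2 by simp
      then have "K\<^sup>2 \<le> 4 * R\<^sup>2" by (simp add: power_mult_distrib)
      then have "K\<^sup>2 * M \<le> 4 * R\<^sup>2 * M" using M14 by (intro mult_right_mono) auto
      also have "\<dots> = 4 * real m" unfolding M_def using Rne by simp
      finally show ?thesis .
    qed
    have "K\<^sup>2 * ln (real n) \<le> K\<^sup>2 * (36 * M * ln K)" using L by (rule mult_left_mono) simp
    also have "\<dots> = 36 * (K\<^sup>2 * M) * ln K" by (simp add: algebra_simps)
    also have "\<dots> \<le> 36 * (4 * real m) * ln K" using KM lnK by (intro mult_right_mono mult_left_mono) auto
    also have "\<dots> \<le> 160 * real m * ln K" using lnK by (intro mult_right_mono) auto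
    finally show ?thesis .
  qed
  have lnKpos: "0 < ln K" using lnK by simp
  have "(1/160) * K\<^sup>2 * ln (real n) / ln K \<le> real m"
    using main lnKpos by (simp add: pos_divide_le_eq)
  then show "real m \<ge> 1/160 * (real k)\<^sup>2 * ln (real n) / ln (real k)" unfolding K_def by simp
qed

end
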